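(* Fix $\varepsilon>0$, put $t^{(a,b)}:=\frac{1-b}a$, let $Z_0^N$ start at $\lfloor N/\sqrt{\log N}\rfloor$, and let $Y_0^N(t):=\log_N^+\big(Z_0^N(t\varphi_N^{-1}\log N)\big)$ for $t\in[0,t^{(a,b)}+\varepsilon]$. Define $\widetilde Y_0^N(t):=\max_{t\le u\le t^{(a,b)}+\varepsilon}Y_0^N(u)$. Then $$\sup_{0\le t\le t^{(a,b)}+\varepsilon}\big|\widetilde Y_0^N(t)-Y_0^N(t)\big|\to0\quad\text{in probability as }N\to\infty.$$
   Context: Standing assumptions: $a>0$, $0<\varphi_N\le1$, $-\log_N\varphi_N\to b\in[0,1)$. $Z_0^N$ is the Markov chain on $\mathbb N_0$ jumping $k\to k+1$ at rate $k$ and $k\to k-1$ at rate $(1+a\varphi_N)k$. $\log_N^+(x):=\max\{\log x/\log N,0\}$ for $x>0$, $\log_N^+(0):=0$. *)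

theory Defs
  imports "HOL-Probability.Probability"
begin

definition logNp :: "nat \<Rightarrow> real \<Rightarrow> real" where
  "logNp N x = (if x > 0 then max (ln x / ln (real N)) 0 else 0)"

definition driving_space :: "real \<Rightarrow> (nat \<Rightarrow> real \<times> bool) measure" where
  "driving_space p = PiM UNIV (\<lambda>_. density lborel (exponential_density 1)
                                     \<Otimes>\<^sub>M measure_pmf (bernoulli_pmf p))"

text \<open>Jump chain of the birth-death chain with up rate k and down rate (1+c)k:
  from k>0 go up iff B_n is true (probability 1/(2+c)); 0 is absorbing.\<close>
fun jump_chain :: "nat \<Rightarrow> (nat \<Rightarrow> real \<times> bool) \<Rightarrow> nat \<Rightarrow> nat" where
  "jump_chain z0 \<omega> 0 = z0"
| "jump_chain z0 \<omega> (Suc n) =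
     (let k = jump_chain z0 \<omega> n in
      if k = 0 then 0 else if snd (\<omega> n) then k + 1 else k - 1)"

text \<open>Jump times: holding time in state k>0 is E_n / ((2+c) k) ~ Exp((2+c)k);
  infinite in the absorbing state 0.\<close>
fun jump_time :: "real \<Rightarrow> nat \<Rightarrow> (nat \<Rightarrow> real \<times> bool) \<Rightarrow> nat \<Rightarrow> ereal" where
  "jump_time c z0 \<omega> 0 = 0"
| "jump_time c z0 \<omega> (Suc n) =
     (let k = jump_chain z0 \<omega> n in
      if k = 0 then \<infinity>
      else jump_time c z0 \<omega> n + ereal (fst (\<omega> n) / ((2 + c) * real k)))"

text \<open>The continuous-time chain: value at time t >= 0 is the state of the jump chain
  in the holding interval containing t (after explosion, a null event, it is set to 0).\<close>
definition bd_chain :: "real \<Rightarrow> nat \<Rightarrow> (nat \<Rightarrow> real \<times> bool) \<Rightarrow> real \<Rightarrow> nat" where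
  "bd_chain c z0 \<omega> t =
     (if \<exists>n. ereal t < jump_time c z0 \<omega> n
      then jump_chain z0 \<omega> ((LEAST n. ereal t < jump_time c z0 \<omega> n) - 1)
      else 0)"

end

theory Submission
  imports Defs "HOL-Real_Asymp.Real_Asymp"
begin


definition stepb :: "nat \<Rightarrow> bool \<Rightarrow> nat" where
  "stepb k b = (if k = 0 then 0 else if b then k + 1 else k - 1)"

definition M0 :: "real \<Rightarrow> (real \<times> bool) measure" where
  "M0 p = density lborel (exponential_density 1) \<Otimes>\<^sub>M measure_pmf (bernoulli_pmf p)"

lemma M0_prob: "prob_space (M0 p)"
  unfolding M0_def
  by (intro prob_space_pair prob_space_exponential_density prob_space_measure_pmf) simp

lemma driving_space_M0: "driving_space p = PiM UNIV (\<lambda>_. M0 p)"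
  unfolding driving_space_def M0_def by simp

lemma jump_chain_Suc_step: "jump_chain z \<omega> (Suc n) = stepb (jump_chain z \<omega> n) (snd (\<omega> n))"
  by (simp add: stepb_def Let_def)

lemma jump_chain_shift:
  "jump_chain z \<omega> (Suc n) = jump_chain (stepb z (snd (\<omega> 0))) (\<lambda>i. \<omega> (Suc i)) n"
proof (induction n)
  case 0 then show ?case by (simp add: stepb_def Let_def)
next
  case (Suc n)
  then show ?case by (metis jump_chain_Suc_step)
qed

fun bw :: "real \<Rightarrow> nat \<Rightarrow> real \<Rightarrow> nat \<Rightarrow> (nat \<Rightarrow> real \<times> bool) \<Rightarrow> bool" where
  "bw C 0 r x \<omega> = (C * max r 1 < real x)"
| "bw C (Suc n) r x \<omega> = (C * max r 1 < real x \<or>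
      bw C n (min r (real x)) (stepb x (snd (\<omega> 0))) (\<lambda>i. \<omega> (Suc i)))"

lemma bw_Suc_mono: "bw C n r x \<omega> \<Longrightarrow> bw C (Suc n) r x \<omega>"
proof (induction n arbitrary: r x \<omega>)
  case 0 then show ?case by simp
next
  case (Suc n) then show ?case by (metis bw.simps(2))
qed

lemma bw_mono: "m \<le> n \<Longrightarrow> bw C m r x \<omega> \<Longrightarrow> bw C n r x \<omega>"
proof (induction n rule: dec_induct)
  case base then show ?case by simp
next
  case (step n) then show ?case using bw_Suc_mono by blast
qed

lemma bw_complete:
  assumes "1 \<le> C" "i \<le> n"
    and "C * max r 1 < real (jump_chain x \<omega> i) \<or>
         (\<exists>j\<le>i. C * max (real (jump_chain x \<omega> j)) 1 < real (jump_chain x \<omega> i))"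
  shows "bw C n r x \<omega>"
  using assms(2,3)
proof (induction n arbitrary: i r x \<omega>)
  case 0
  then have i0: "i = 0" by simp
  have "\<not> C * max (real x) 1 < real x"
  proof -
    have "real x \<le> max (real x) 1" by simp
    also have "\<dots> = 1 * max (real x) 1" by simp
    also have "\<dots> \<le> C * max (real x) 1" by (rule mult_right_mono) (use assms(1) in auto)
    finally show ?thesis by simp
  qed
  then show ?case using 0 i0 by auto
next
  case (Suc n)
  show ?case
  proof (cases i)
    case 0
    have "\<not> C * max (real x) 1 < real x"
    proof -
      have "real x \<le> max (real x) 1" by simp
      also have "\<dots> = 1 * max (real x) 1" by simp
      also have "\<dots> \<le> C * max (real x) 1" by (rule mult_right_mono) (use assms(1) in auto)
      finally show ?thesis by simp
    qed
    then show ?thesis using Suc.prems 0 by auto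
  next
    case (Suc i')
    let ?x' = "stepb x (snd (\<omega> 0))" and ?\<omega>' = "\<lambda>i. \<omega> (Suc i)"
    let ?r' = "min r (real x)"
    have X: "jump_chain x \<omega> (Suc k) = jump_chain ?x' ?\<omega>' k" for k
      by (rule jump_chain_shift)
    have Cpos: "0 \<le> C" using assms(1) by simp
    have le1: "C * max ?r' 1 \<le> C * max r 1"
      using Cpos by (intro mult_left_mono) auto
    have le2: "C * max ?r' 1 \<le> C * max (real x) 1"
      using Cpos by (intro mult_left_mono) auto
    have "C * max ?r' 1 < real (jump_chain ?x' ?\<omega>' i') \<or>
         (\<exists>j\<le>i'. C * max (real (jump_chain ?x' ?\<omega>' j)) 1 < real (jump_chain ?x' ?\<omega>' i'))"
    proof -
      from Suc.prems(2) consider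
          "C * max r 1 < real (jump_chain x \<omega> i)"
        | j where "j \<le> i" "C * max (real (jump_chain x \<omega> j)) 1 < real (jump_chain x \<omega> i)"
        by blast
      then show ?thesis
      proof cases
        case 1 then show ?thesis using le1 X Suc by auto
      next
        case (2 j)
        show ?thesis
        proof (cases j)
          case 0 then show ?thesis using 2 le2 X Suc by auto
        next
          case (Suc j')
          then show ?thesis using 2 X \<open>i = Suc i'\<close> by (intro disjI2 exI[of _ j']) auto
        qed
      qed
    qed
    then have "bw C n ?r' ?x' ?\<omega>'"
      using Suc.IH[of i'] Suc.prems(1) \<open>i = Suc i'\<close> by auto
    then show ?thesis by simp
  qed
qed

definition Wf :: "real \<Rightarrow> nat \<Rightarrow> real \<Rightarrow> nat \<Rightarrow> real" where
  "Wf C K r x = (\<Sum>j\<le>K. if r \<le> 2^j then min 1 (2 * real x / (C * 2^j)) else 4 / C)"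

lemma Wf_nonneg: "0 < C \<Longrightarrow> 0 \<le> Wf C K r x"
  unfolding Wf_def by (intro sum_nonneg) auto

lemma exists_level: "1 \<le> (y::real) \<Longrightarrow> y \<le> 2^K \<Longrightarrow> \<exists>j\<le>K. y \<le> 2^j \<and> 2^j < 2*y"
proof (induction K)
  case 0 then show ?case by auto
next
  case (Suc K)
  show ?case
  proof (cases "y \<le> 2^K")
    case True then show ?thesis using Suc by (meson le_Suc_eq)
  next
    case False then show ?thesis using Suc.prems by (intro exI[of _ "Suc K"]) auto
  qed
qed

lemma Wf_ge1:
  assumes "0 < C" "max r 1 \<le> 2^K" "C * max r 1 < real x"
  shows "1 \<le> Wf C K r x"
proof -
  obtain j where j: "j \<le> K" "max r 1 \<le> 2^j" "2^j < 2 * max r 1"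
    using exists_level[of "max r 1" K] assms(2) by auto
  have "C * 2^j < 2 * real x"
  proof -
    have "C * 2^j < C * (2 * max r 1)" using j(3) assms(1) by (rule mult_strict_left_mono)
    then show ?thesis using assms(3) by linarith
  qed
  then have "1 \<le> 2 * real x / (C * 2^j)" using assms(1) by (simp add: field_simps)
  then have t1: "(if r \<le> 2^j then min 1 (2 * real x / (C * 2^j)) else 4 / C) = 1"
    using j(2) by auto
  have "(if r \<le> 2^j then min 1 (2 * real x / (C * 2^j)) else 4 / (C::real))
        \<le> (\<Sum>j\<le>K. if r \<le> 2^j then min 1 (2 * real x / (C * 2^j)) else 4 / C)"
    using j(1) assms(1) by (intro member_le_sum) auto
  then show ?thesis unfolding Wf_def using t1 by simp
qed

lemma concave_step:
  fixes p u d :: real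
  assumes "0 \<le> p" "p \<le> 1/2" "0 < d"
  shows "p * min 1 (u + d) + (1 - p) * min 1 (u - d) \<le> min 1 u"
proof (cases "u + d \<le> 1")
  case True
  then have "p * min 1 (u + d) + (1 - p) * min 1 (u - d) = u + (2*p - 1) * d"
  proof -
    have "min 1 (u + d) = u + d" "min 1 (u - d) = u - d" using True assms by auto
    then show ?thesis by (simp add: algebra_simps)
  qed
  also have "\<dots> \<le> u" using assms by (simp add: mult_nonpos_nonneg)
  finally show ?thesis using True assms by simp
next
  case False
  show ?thesis
  proof (cases "u \<le> 1")
    case True
    have "p * min 1 (u + d) + (1 - p) * min 1 (u - d) \<le> p + (1 - p) * (u - d)"
      using False assms by (intro add_mono mult_left_mono) auto
    also have "\<dots> \<le> u"
    proof -
      have "p * (1 - u) \<le> p * d" using False assms by (intro mult_left_mono) auto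
      also have "\<dots> \<le> (1 - p) * d" using assms by (intro mult_right_mono) auto
      finally show ?thesis by (simp add: algebra_simps)
    qed
    finally show ?thesis using True by simp
  next
    case False
    have "p * min 1 (u + d) + (1 - p) * min 1 (u - d) \<le> p * 1 + (1 - p) * 1"
      using assms by (intro add_mono mult_left_mono) auto
    then show ?thesis using False by simp
  qed
qed

lemma Wf_super:
  assumes C: "1 \<le> C" and p: "0 \<le> p" "p \<le> 1/2" and x: "0 < x"
  shows "p * Wf C K (min r (real x)) (x + 1) + (1 - p) * Wf C K (min r (real x)) (x - 1)
         \<le> Wf C K r x"
proof -
  have trm: "p * (if min r (real x) \<le> 2^j then min 1 (2 * real (x+1) / (C * 2^j)) else 4 / C)
     + (1 - p) * (if min r (real x) \<le> 2^j then min 1 (2 * real (x-1) / (C * 2^j)) else 4 / C)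
     \<le> (if r \<le> 2^j then min 1 (2 * real x / (C * 2^j)) else 4 / C)" for j :: nat
  proof -
    have Cp: "0 < C * 2^j" using C by simp
    define u where "u = 2 * real x / (C * 2^j)"
    define d where "d = 2 / (C * 2^j)"
    have d: "0 < d" using Cp by (simp add: d_def)
    have e1: "2 * real (x+1) / (C * 2^j) = u + d"
    proof -
      have "2 * real (x+1) / (C * 2^j) = (2 * real x + 2) / (C * 2^j)" by simp
      also have "\<dots> = u + d" unfolding u_def d_def by (rule add_divide_distrib)
      finally show ?thesis .
    qed
    have e2: "2 * real (x-1) / (C * 2^j) = u - d"
    proof -
      have "2 * real (x-1) / (C * 2^j) = (2 * real x - 2) / (C * 2^j)" using x by (simp add: of_nat_diff)
      also have "\<dots> = u - d" unfolding u_def d_def by (rule diff_divide_distrib)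
      finally show ?thesis .
    qed
    show ?thesis
    proof (cases "r \<le> 2^j")
      case True
      have m: "min r (real x) \<le> 2^j" using True by (meson min.coboundedI1)
      show ?thesis
        by (simp only: m True if_True e1 e2 flip: u_def) (rule concave_step[OF p d])
    next
      case rgt: False
      show ?thesis
      proof (cases "real x \<le> 2^j")
        case True
        have b: "u + d \<le> 4 / C"
        proof -
          have "u + d = 2 * (real x + 1) / (C * 2^j)" unfolding u_def d_def by (simp add: add_divide_distrib[symmetric])
          also have "\<dots> \<le> 2 * (2 * 2^j) / (C * 2^j)"
          proof -
            have "(1::real) \<le> 2^j" by simp
            then have "2 * (real x + 1) \<le> 2 * (2 * 2^j)" using True by (smt (verit))
            then show ?thesis using Cp by (intro divide_right_mono) auto
          qed
          also have "\<dots> = 4 / C" by simp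
          finally show ?thesis .
        qed
        have "min 1 (u + d) \<le> 4 / C" using b by simp
        moreover have "min 1 (u - d) \<le> 4 / C" using b d by simp
        ultimately have "p * min 1 (u + d) + (1 - p) * min 1 (u - d) \<le> p * (4/C) + (1 - p) * (4/C)"
          using p by (intro add_mono mult_left_mono) auto
        also have "\<dots> = 4 / C" by (simp add: algebra_simps add_divide_distrib[symmetric])
        finally have fin: "p * min 1 (u + d) + (1 - p) * min 1 (u - d) \<le> 4 / C" .
        have m: "min r (real x) \<le> 2^j" using True by (meson min.coboundedI2)
        show ?thesis using fin by (simp only: m rgt if_True if_False e1 e2)
      next
        case False
        then have "\<not> min r (real x) \<le> 2^j" using rgt by (simp only: min_le_iff_disj) blast
        then show ?thesis using rgt by (simp add: algebra_simps add_divide_distrib[symmetric])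
      qed
    qed
  qed
  show ?thesis
    unfolding Wf_def sum_distrib_left sum.distrib[symmetric]
    by (rule sum_mono) (rule trm)
qed

lemma Wf_zero: "0 < C \<Longrightarrow> 0 \<le> r \<Longrightarrow> Wf C K (min r 0) 0 \<le> Wf C K r 0"
  unfolding Wf_def by (intro sum_mono) auto

lemma Wf_le: "0 < C \<Longrightarrow> real x \<le> r \<Longrightarrow> Wf C K r x \<le> (K + 1) * (4 / C)"
proof -
  assume C: "0 < C" and xr: "real x \<le> r"
  have "Wf C K r x \<le> (\<Sum>j\<le>K. 4 / C)"
    unfolding Wf_def
  proof (intro sum_mono)
    fix j :: nat
    show "(if r \<le> 2^j then min 1 (2 * real x / (C * 2^j)) else 4 / C) \<le> 4 / C"
    proof (cases "r \<le> 2^j")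
      case True
      have hx: "2 * real x \<le> 2 * 2^j" using True xr by linarith
      have "2 * real x / (C * 2^j) \<le> 2 * 2^j / (C * 2^j)"
        using hx C by (intro divide_right_mono) auto
      also have "\<dots> \<le> 4 / C" using C by (simp add: field_simps)
      finally show ?thesis using True by simp
    qed simp
  qed
  then show ?thesis by (simp add: ac_simps)
qed



lemma shift_meas: "(\<lambda>\<omega> i. \<omega> (Suc i)) \<in> (PiM UNIV (\<lambda>_. M0 p)) \<rightarrow>\<^sub>M (PiM UNIV (\<lambda>_. M0 p))"
  by (rule measurable_PiM_single') (auto simp: space_PiM)

lemma step_meas: "(\<lambda>\<omega>. stepb x (snd (\<omega> (0::nat)))) \<in> (PiM UNIV (\<lambda>_. M0 p)) \<rightarrow>\<^sub>M count_space UNIV"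
proof -
  have "(\<lambda>s. stepb x (snd s)) \<in> M0 p \<rightarrow>\<^sub>M count_space UNIV"
    unfolding M0_def stepb_def by measurable
  moreover have "(\<lambda>\<omega>. \<omega> 0) \<in> (PiM UNIV (\<lambda>_. M0 p)) \<rightarrow>\<^sub>M M0 p"
    by (rule measurable_component_singleton) simp
  ultimately show ?thesis by (rule measurable_compose[rotated])
qed

lemma bw_pred: "Measurable.pred (PiM UNIV (\<lambda>_. M0 p)) (bw C n r x)"
proof (induction n arbitrary: r x)
  case 0 then show ?case by simp
next
  case (Suc n)
  have "Measurable.pred (PiM UNIV (\<lambda>_. M0 p))
          (\<lambda>\<omega>. (\<lambda>i \<omega>. bw C n (min r (real x)) i (\<lambda>i. \<omega> (Suc i))) (stepb x (snd (\<omega> 0))) \<omega>)"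
  proof (rule measurable_compose_countable[OF _ step_meas])
    fix i
    show "Measurable.pred (PiM UNIV (\<lambda>_. M0 p)) (\<lambda>\<omega>. bw C n (min r (real x)) i (\<lambda>i. \<omega> (Suc i)))"
      using measurable_compose[OF shift_meas Suc.IH] by simp
  qed
  then show ?case by simp
qed

lemma nn_integral_M0_snd:
  assumes "0 \<le> p" "p \<le> 1" 
  shows "(\<integral>\<^sup>+s. F (snd s) \<partial>M0 p) = F True * ennreal p + F False * ennreal (1 - p)"
proof -
  interpret E: prob_space "density lborel (exponential_density (1::real))"
    by (rule prob_space_exponential_density) simp
  interpret B: prob_space "measure_pmf (bernoulli_pmf p)" by (rule prob_space_measure_pmf)
  interpret P: pair_sigma_finite "density lborel (exponential_density (1::real))" "measure_pmf (bernoulli_pmf p)" ..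
  have "(\<integral>\<^sup>+s. F (snd s) \<partial>M0 p) = (\<integral>\<^sup>+b. \<integral>\<^sup>+e. F (snd (e, b)) \<partial>density lborel (exponential_density 1) \<partial>measure_pmf (bernoulli_pmf p))"
    unfolding M0_def by (rule P.nn_integral_snd[symmetric]) simp
  also have "\<dots> = (\<integral>\<^sup>+b. F b \<partial>measure_pmf (bernoulli_pmf p))"
  proof -
    have "emeasure (density lborel (\<lambda>x. ennreal (exponential_density 1 x))) UNIV = 1"
      using E.emeasure_space_1 by simp
    then show ?thesis by simp
  qed
  also have "\<dots> = F True * ennreal p + F False * ennreal (1 - p)"
    using assms by (subst nn_integral_bernoulli_pmf) auto
  finally show ?thesis .
qed

lemma bw_bound:
  assumes p: "0 \<le> p" "p \<le> 1/2" and C: "1 \<le> C"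
  shows "0 \<le> r \<Longrightarrow> max r 1 \<le> 2^K \<Longrightarrow>
    (\<integral>\<^sup>+\<omega>. (if bw C n r x \<omega> then 1 else 0) \<partial>(PiM UNIV (\<lambda>_. M0 p))) \<le> ennreal (Wf C K r x)"
proof (induction n arbitrary: r x)
  interpret prob_space "M0 p" by (rule M0_prob)
  interpret S: sequence_space "M0 p" ..
  case 0
  show ?case
  proof (cases "C * max r 1 < real x")
    case True
    then have "1 \<le> Wf C K r x" using Wf_ge1[of C r K x] C 0 by simp
    then show ?thesis using S.emeasure_space_1 by (simp add: ennreal_leI)
  next
    case False
    then show ?thesis by simp
  qed
next
  interpret prob_space "M0 p" by (rule M0_prob)
  interpret S: sequence_space "M0 p" ..
  interpret SP: prob_space "PiM UNIV (\<lambda>_. M0 p)" by (intro prob_space_PiM M0_prob)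
  interpret P: pair_sigma_finite "M0 p" "PiM UNIV (\<lambda>_. M0 p)" ..
  case (Suc n)
  let ?S = "PiM (UNIV::nat set) (\<lambda>_. M0 p)"
  show ?case
  proof (cases "C * max r 1 < real x")
    case True
    then have "1 \<le> Wf C K r x" using Wf_ge1[of C r K x] C Suc.prems by simp
    have "(\<integral>\<^sup>+\<omega>. (if bw C (Suc n) r x \<omega> then 1 else 0) \<partial>?S) = (\<integral>\<^sup>+\<omega>. 1 \<partial>?S)"
      using True by simp
    also have "\<dots> = 1" using S.emeasure_space_1 by simp
    also have "\<dots> \<le> ennreal (Wf C K r x)" using \<open>1 \<le> Wf C K r x\<close> by (simp add: ennreal_leI)
    finally show ?thesis .
  next
    case False
    let ?r = "min r (real x)"
    let ?G = "\<lambda>y \<omega>. (if bw C n ?r y \<omega> then 1 else 0) :: ennreal"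
    have Gm: "?G y \<in> borel_measurable ?S" for y
      using bw_pred[where p=p and C=C and n=n and r="?r" and x=y] by measurable
    have "(\<integral>\<^sup>+\<omega>. (if bw C (Suc n) r x \<omega> then 1 else 0) \<partial>?S)
        = (\<integral>\<^sup>+\<omega>. ?G (stepb x (snd (\<omega> 0))) (\<lambda>i. \<omega> (Suc i)) \<partial>?S)"
      using False by (intro nn_integral_cong) simp
    also have "\<dots> = (\<integral>\<^sup>+\<omega>. ?G (stepb x (snd (\<omega> 0))) (\<lambda>i. \<omega> (Suc i))
                    \<partial>distr (M0 p \<Otimes>\<^sub>M ?S) ?S (\<lambda>(s, \<omega>). case_nat s \<omega>))"
      by (simp add: S.PiM_iter)
    also have "\<dots> = (\<integral>\<^sup>+z. ?G (stepb x (snd (fst z))) (snd z) \<partial>(M0 p \<Otimes>\<^sub>M ?S))"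
    proof -
      have fm: "(\<lambda>(s, \<omega>). case_nat s \<omega>) \<in> (M0 p \<Otimes>\<^sub>M ?S) \<rightarrow>\<^sub>M ?S"
        by measurable
      have Hm: "(\<lambda>\<omega>. ?G (stepb x (snd (\<omega> 0))) (\<lambda>i. \<omega> (Suc i))) \<in> borel_measurable ?S"
      proof (rule measurable_compose_countable[OF _ step_meas])
        fix y
        show "(\<lambda>\<omega>. ?G y (\<lambda>i. \<omega> (Suc i))) \<in> borel_measurable ?S"
          using measurable_compose[OF shift_meas Gm] by simp
      qed
      show ?thesis
        by (subst nn_integral_distr[OF fm]) (simp_all add: Hm split_beta)
    qed
    also have "\<dots> = (\<integral>\<^sup>+s. \<integral>\<^sup>+\<omega>. ?G (stepb x (snd s)) \<omega> \<partial>?S \<partial>M0 p)"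
    proof -
      have "(\<lambda>z. ?G (stepb x (snd (fst z))) (snd z)) \<in> borel_measurable (M0 p \<Otimes>\<^sub>M ?S)"
      proof (rule measurable_compose_countable[where g = "\<lambda>z. stepb x (snd (fst z))"])
        fix y
        show "(\<lambda>z. ?G y (snd z)) \<in> borel_measurable (M0 p \<Otimes>\<^sub>M ?S)"
          by (rule measurable_compose[OF measurable_snd Gm])
      next
        show "(\<lambda>z. stepb x (snd (fst z))) \<in> (M0 p \<Otimes>\<^sub>M ?S) \<rightarrow>\<^sub>M count_space UNIV"
          unfolding M0_def stepb_def by measurable
      qed
      from SP.nn_integral_fst[OF this] show ?thesis by simp
    qed
    also have "\<dots> \<le> (\<integral>\<^sup>+s. ennreal (Wf C K ?r (stepb x (snd s))) \<partial>M0 p)"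
    proof (rule nn_integral_mono)
      fix s
      show "(\<integral>\<^sup>+\<omega>. ?G (stepb x (snd s)) \<omega> \<partial>?S) \<le> ennreal (Wf C K ?r (stepb x (snd s)))"
      proof -
        have r1: "0 \<le> ?r" using Suc.prems by simp
        have r2: "max ?r 1 \<le> 2^K" using Suc.prems(2) by (smt (verit))
        show ?thesis by (rule Suc.IH[OF r1 r2])
      qed
    qed
    also have "\<dots> = ennreal (Wf C K ?r (stepb x True)) * ennreal p
                    + ennreal (Wf C K ?r (stepb x False)) * ennreal (1 - p)"
      using p by (subst nn_integral_M0_snd) auto
    also have "\<dots> = ennreal (p * Wf C K ?r (stepb x True) + (1 - p) * Wf C K ?r (stepb x False))"
      using p C Wf_nonneg[of C K] by (simp add: ennreal_mult'' ennreal_plus mult.commute)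
    also have "\<dots> \<le> ennreal (Wf C K r x)"
    proof (rule ennreal_leI)
      show "p * Wf C K ?r (stepb x True) + (1 - p) * Wf C K ?r (stepb x False) \<le> Wf C K r x"
      proof (cases "x = 0")
        case True
        then have "p * Wf C K ?r (stepb x True) + (1 - p) * Wf C K ?r (stepb x False)
                   = Wf C K (min r 0) 0" by (simp add: stepb_def algebra_simps)
        also have "\<dots> \<le> Wf C K r x" using True Wf_zero[of C r K] C Suc.prems by simp
        finally show ?thesis .
      next
        case False
        then show ?thesis using Wf_super[OF C p, of x K r] by (simp add: stepb_def)
      qed
    qed
    finally show ?thesis .
  qed
qed



lemma bw_set_sets: "{\<omega> \<in> space (driving_space p). \<exists>n. bw C n r x \<omega>} \<in> sets (driving_space p)"
proof -
  have "Measurable.pred (PiM UNIV (\<lambda>_. M0 p)) (\<lambda>\<omega>. \<exists>n. bw C n r x \<omega>)"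
    by (intro pred_intros_countable bw_pred)
  then show ?thesis unfolding driving_space_M0 pred_def by simp
qed

lemma bw_union_bound:
  assumes p: "0 \<le> p" "p \<le> 1/2" and C: "1 \<le> C" and r: "0 \<le> r" "max r 1 \<le> 2^K"
  shows "measure (driving_space p) {\<omega> \<in> space (driving_space p). \<exists>n. bw C n r x \<omega>} \<le> Wf C K r x"
proof -
  let ?S = "PiM (UNIV::nat set) (\<lambda>_. M0 p)"
  define B where "B n = {\<omega> \<in> space ?S. bw C n r x \<omega>}" for n
  have Bs: "B n \<in> sets ?S" for n
    using bw_pred[where p=p and C=C and n=n and r=r and x=x] unfolding B_def pred_def by simp
  have Bb: "emeasure ?S (B n) \<le> ennreal (Wf C K r x)" for n
  proof -
    have "emeasure ?S (B n) = (\<integral>\<^sup>+\<omega>. indicator (B n) \<omega> \<partial>?S)"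
      using Bs by simp
    also have "\<dots> = (\<integral>\<^sup>+\<omega>. (if bw C n r x \<omega> then 1 else 0) \<partial>?S)"
      by (intro nn_integral_cong) (simp add: B_def indicator_def)
    also have "\<dots> \<le> ennreal (Wf C K r x)" by (rule bw_bound[OF p C r])
    finally show ?thesis .
  qed
  have inc: "incseq B"
    unfolding incseq_def B_def using bw_mono by blast
  have eq: "{\<omega> \<in> space ?S. \<exists>n. bw C n r x \<omega>} = (\<Union>n. B n)"
    unfolding B_def by auto
  have "emeasure ?S (\<Union>n. B n) = (SUP n. emeasure ?S (B n))"
    using Bs inc by (intro SUP_emeasure_incseq[symmetric]) auto
  also have "\<dots> \<le> ennreal (Wf C K r x)" using Bb by (intro SUP_least) auto
  finally have "emeasure ?S (\<Union>n. B n) \<le> ennreal (Wf C K r x)" .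
  then show ?thesis
    unfolding driving_space_M0 eq measure_def
    using Wf_nonneg[of C K r x] C by (intro enn2real_leI) auto
qed

lemma bd_chain_mono:
  assumes P: "\<And>i j. j \<le> i \<Longrightarrow> real (jump_chain z \<omega> i) \<le> C * max (real (jump_chain z \<omega> j)) 1"
    and ss: "s \<le> s'" and C: "0 \<le> C"
  shows "real (bd_chain c z \<omega> s') \<le> C * max (real (bd_chain c z \<omega> s)) 1"
proof (cases "\<exists>n. ereal s' < jump_time c z \<omega> n")
  case True
  then obtain n where n: "ereal s' < jump_time c z \<omega> n" by blast
  have n': "ereal s < jump_time c z \<omega> n" using n ss by (meson ereal_less_eq(3) order_le_less_trans)
  define m where "m = (LEAST n. ereal s < jump_time c z \<omega> n)"
  define m' where "m' = (LEAST n. ereal s' < jump_time c z \<omega> n)"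
  have m'1: "ereal s' < jump_time c z \<omega> m'" unfolding m'_def using n by (rule LeastI)
  have "ereal s < jump_time c z \<omega> m'" using m'1 ss by (meson ereal_less_eq(3) order_le_less_trans)
  then have "m \<le> m'" unfolding m_def by (rule Least_le)
  then have "m - 1 \<le> m' - 1" by simp
  moreover have "bd_chain c z \<omega> s' = jump_chain z \<omega> (m' - 1)"
    unfolding bd_chain_def m'_def using True by simp
  moreover have "bd_chain c z \<omega> s = jump_chain z \<omega> (m - 1)"
    unfolding bd_chain_def m_def using n' by auto
  ultimately show ?thesis using P by simp
next
  case False
  then have "bd_chain c z \<omega> s' = 0" unfolding bd_chain_def by simp
  then show ?thesis using C by simp
qed

lemma logNp_nonneg: "0 \<le> logNp N v"
  unfolding logNp_def by simp

lemma logNp_step: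
  assumes N: "2 \<le> N" and d: "0 < \<delta>" and v: "0 \<le> v"
    and le: "v' \<le> real N powr \<delta> * max v 1"
  shows "logNp N v' \<le> logNp N v + \<delta>"
proof (cases "v' > 0")
  case False
  then show ?thesis using d logNp_nonneg[of N v] unfolding logNp_def by simp
next
  case True
  have lnN: "0 < ln (real N)" using N by simp
  have "ln v' \<le> ln (real N powr \<delta> * max v 1)"
    using True le by (subst ln_le_cancel_iff) auto
  also have "\<dots> = \<delta> * ln (real N) + ln (max v 1)"
    using N by (simp add: ln_mult ln_powr)
  finally have h: "ln v' / ln (real N) \<le> \<delta> + ln (max v 1) / ln (real N)"
    using lnN by (simp add: field_simps)
  have "ln (max v 1) / ln (real N) \<le> logNp N v"
  proof (cases "1 \<le> v")
    case True
    then show ?thesis unfolding logNp_def by simp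
  next
    case False
    then have "max v 1 = 1" by simp
    then show ?thesis using logNp_nonneg[of N v] by simp
  qed
  then have "ln v' / ln (real N) \<le> logNp N v + \<delta>" using h by simp
  moreover have "0 \<le> logNp N v + \<delta>" using logNp_nonneg[of N v] d by simp
  ultimately show ?thesis unfolding logNp_def using True by simp
qed



lemma measure_bound_N:
  fixes N :: nat and \<delta> q :: real
  assumes N: "3 \<le> N" and d: "0 < \<delta>" and q: "0 \<le> q" "q \<le> 1/2"
  shows "measure (driving_space q)
           {\<omega> \<in> space (driving_space q). \<exists>n. bw (real N powr \<delta>) n (real (nat \<lfloor>real N / sqrt (ln (real N))\<rfloor>))
                 (nat \<lfloor>real N / sqrt (ln (real N))\<rfloor>) \<omega>}
         \<le> 4 * (log 2 (real N) + 2) / real N powr \<delta>"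
proof -
  define z where "z = nat \<lfloor>real N / sqrt (ln (real N))\<rfloor>"
  define C where "C = real N powr \<delta>"
  define K where "K = nat \<lceil>log 2 (real N)\<rceil>"
  have C1: "1 \<le> C" unfolding C_def using N d by (intro ge_one_powr_ge_zero) auto
  have lnN: "1 \<le> ln (real N)"
  proof -
    have "exp 1 \<le> (3::real)" using exp_le by simp
    also have "\<dots> \<le> real N" using N by simp
    finally show ?thesis using N by (subst ln_ge_iff) auto
  qed
  have zN: "real z \<le> real N"
  proof -
    have s: "1 \<le> sqrt (ln (real N))" using lnN by simp
    have "real N / sqrt (ln (real N)) \<le> real N / 1"
      by (rule divide_left_mono) (use s in auto)
    then show ?thesis unfolding z_def by linarith
  qed
  have lg: "0 \<le> log 2 (real N)" using N by simp
  have "real N = 2 powr log 2 (real N)" using N by simp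
  also have "\<dots> \<le> 2 powr real K" unfolding K_def using lg by (intro powr_mono) auto
  also have "\<dots> = 2 ^ K" by (simp add: powr_realpow)
  finally have N2K: "real N \<le> 2 ^ K" .
  have r: "max (real z) 1 \<le> 2^K" using zN N2K N by simp
  have "measure (driving_space q) {\<omega> \<in> space (driving_space q). \<exists>n. bw C n (real z) z \<omega>}
        \<le> Wf C K (real z) z"
    by (rule bw_union_bound[OF q C1 _ r]) simp
  also have "\<dots> \<le> (real K + 1) * (4 / C)" using Wf_le[of C z "real z" K] C1 by simp
  also have "\<dots> \<le> (log 2 (real N) + 2) * (4 / C)"
  proof -
    have "real K \<le> log 2 (real N) + 1" unfolding K_def using lg by linarith
    then show ?thesis using C1 by (intro mult_right_mono) auto
  qed
  also have "\<dots> = 4 * (log 2 (real N) + 2) / C" by simp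
  finally show ?thesis unfolding z_def C_def .
qed

theorem lemma4p14:
  fixes a b \<epsilon> :: real and \<phi> :: "nat \<Rightarrow> real"
  assumes a_pos: "a > 0"
    and phi_pos: "\<And>N. 0 < \<phi> N" and phi_le1: "\<And>N. \<phi> N \<le> 1"
    and phi_lim: "(\<lambda>N. - ln (\<phi> N) / ln (real N)) \<longlonglongrightarrow> b"
    and b_nonneg: "0 \<le> b" and b_lt1: "b < 1"
    and eps_pos: "\<epsilon> > 0"
  defines "tab \<equiv> (1 - b) / a"
  defines "M \<equiv> (\<lambda>N. driving_space (1 / (2 + a * \<phi> N)))"
  defines "z0 \<equiv> (\<lambda>N::nat. nat \<lfloor>real N / sqrt (ln (real N))\<rfloor>)"
  defines "Y \<equiv> (\<lambda>N \<omega> t. logNp N (real (bd_chain (a * \<phi> N) (z0 N) \<omega>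
                                           (t / \<phi> N * ln (real N)))))"
  defines "Yt \<equiv> (\<lambda>N \<omega> t. (SUP u\<in>{t..tab + \<epsilon>}. Y N \<omega> u))"
  defines "D \<equiv> (\<lambda>N \<omega>. (SUP t\<in>{0..tab + \<epsilon>}. \<bar>Yt N \<omega> t - Y N \<omega> t\<bar>))"
  shows "\<forall>\<delta>>0. \<exists>A. (\<forall>N. A N \<in> sets (M N)
                      \<and> {\<omega> \<in> space (M N). \<delta> < D N \<omega>} \<subseteq> A N)
              \<and> (\<lambda>N. measure (M N) (A N)) \<longlonglongrightarrow> 0"
proof (intro allI impI)
  fix \<delta> :: real
  assume d: "0 < \<delta>"
  define T where "T = tab + \<epsilon>"
  have T0: "0 \<le> T" unfolding T_def tab_def using a_pos b_lt1 eps_pos by simp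
  define A where "A N = (if 2 \<le> N then {\<omega> \<in> space (M N). \<exists>n. bw (real N powr \<delta>) n (real (z0 N)) (z0 N) \<omega>}
                         else space (M N))" for N
  have As: "A N \<in> sets (M N)" for N
    unfolding A_def M_def by (auto intro: bw_set_sets)
  have Asub: "{\<omega> \<in> space (M N). \<delta> < D N \<omega>} \<subseteq> A N" for N
  proof (cases "2 \<le> N")
    case False then show ?thesis unfolding A_def by auto
  next
    case N: True
    let ?C = "real N powr \<delta>"
    have C1: "1 \<le> ?C" using N d by (intro ge_one_powr_ge_zero) auto
    show ?thesis
    proof
      fix \<omega> assume w: "\<omega> \<in> {\<omega> \<in> space (M N). \<delta> < D N \<omega>}"
      show "\<omega> \<in> A N"
      proof (rule ccontr)
        assume "\<omega> \<notin> A N"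
        then have nb: "\<And>n. \<not> bw ?C n (real (z0 N)) (z0 N) \<omega>" using w N unfolding A_def by auto
        have P: "real (jump_chain (z0 N) \<omega> i) \<le> ?C * max (real (jump_chain (z0 N) \<omega> j)) 1"
          if "j \<le> i" for i j
        proof (rule ccontr)
          assume "\<not> ?thesis"
          then have "bw ?C i (real (z0 N)) (z0 N) \<omega>"
            using that by (intro bw_complete[OF C1, of i i]) auto
          then show False using nb by blast
        qed
        have Ymono: "Y N \<omega> u \<le> Y N \<omega> t + \<delta>" if "t \<le> u" for t u
        proof -
          have "t / \<phi> N * ln (real N) \<le> u / \<phi> N * ln (real N)"
            using that phi_pos[of N] N by (intro mult_right_mono divide_right_mono) auto
          from bd_chain_mono[OF P this, of "a * \<phi> N"] C1
          have "real (bd_chain (a * \<phi> N) (z0 N) \<omega> (u / \<phi> N * ln (real N)))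
               \<le> ?C * max (real (bd_chain (a * \<phi> N) (z0 N) \<omega> (t / \<phi> N * ln (real N)))) 1"
            by simp
          then show ?thesis unfolding Y_def using N d by (intro logNp_step) auto
        qed
        have Yt_bd: "\<bar>Yt N \<omega> t - Y N \<omega> t\<bar> \<le> \<delta>" if t: "t \<in> {0..T}" for t
        proof -
          have ne: "{t..T} \<noteq> {}" using t by auto
          have bdd: "bdd_above ((Y N \<omega>) ` {t..T})"
            using Ymono by (intro bdd_aboveI2[of _ _ "Y N \<omega> t + \<delta>"]) auto
          have "Yt N \<omega> t \<le> Y N \<omega> t + \<delta>"
            unfolding Yt_def T_def[symmetric] using ne Ymono by (intro cSUP_least) auto
          moreover have "Y N \<omega> t \<le> Yt N \<omega> t"
            unfolding Yt_def T_def[symmetric] using t bdd by (intro cSUP_upper) auto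
          ultimately show ?thesis by simp
        qed
        have "D N \<omega> \<le> \<delta>"
          unfolding D_def T_def[symmetric] using T0 Yt_bd by (intro cSUP_least) auto
        then show False using w by simp
      qed
    qed
  qed
  have lim: "(\<lambda>N. measure (M N) (A N)) \<longlonglongrightarrow> 0"
  proof (rule tendsto_sandwich[where f = "\<lambda>_. 0" and h = "\<lambda>N. 4 * (log 2 (real N) + 2) / real N powr \<delta>"])
    show "\<forall>\<^sub>F N in sequentially. 0 \<le> measure (M N) (A N)" by simp
    show "\<forall>\<^sub>F N in sequentially. measure (M N) (A N) \<le> 4 * (log 2 (real N) + 2) / real N powr \<delta>"
      using eventually_ge_at_top[of "3::nat"]
    proof eventually_elim
      case (elim N)
      have q: "0 \<le> 1 / (2 + a * \<phi> N)" "1 / (2 + a * \<phi> N) \<le> 1/2"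
      proof -
        have ap: "0 < a * \<phi> N" using a_pos phi_pos[of N] by simp
        show "0 \<le> 1 / (2 + a * \<phi> N)" using ap by simp
        show "1 / (2 + a * \<phi> N) \<le> 1/2" using ap by (intro divide_left_mono) auto
      qed
      show ?case
        using measure_bound_N[OF elim d q] elim unfolding A_def M_def z0_def by simp
    qed
    show "(\<lambda>_. 0) \<longlonglongrightarrow> (0::real)" by simp
    show "(\<lambda>N. 4 * (log 2 (real N) + 2) / real N powr \<delta>) \<longlonglongrightarrow> 0"
      using d by real_asymp
  qed
  show "\<exists>A. (\<forall>N. A N \<in> sets (M N) \<and> {\<omega> \<in> space (M N). \<delta> < D N \<omega>} \<subseteq> A N)
              \<and> (\<lambda>N. measure (M N) (A N)) \<longlonglongrightarrow> 0"
    using As Asub lim by blast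
qed


end
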